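(* Let $\beta>0$ and let $p=\lfloor\beta\rfloor$. Then $\Phi_\beta(p,0)=1$ and $\Phi_\beta(p+1,0)<1$.
   Context: For $\beta>0$, $W_\beta$ is the random walk on $\mathbb{Z}^2$ starting at the origin which, independently at each step, moves from $(a,b)$ to $(a+1,b)$ with probability $1/(\beta+1)$ and to $(a,b+1)$ with probability $\beta/(\beta+1)$. For a nonnegative integer $q$, $\Phi_\beta(q,0)$ is the probability that $W_\beta$ visits at least one of the lattice points $(n,qn+1)$, $n\ge 0$ (i.e. crosses the line $y=qx$). *)

theory Defs
  imports "HOL-Probability.Probability"
begin

text \<open>The walk W_beta is driven by an i.i.d. sequence of steps: a step is True
  (move from (a,b) to (a,b+1)) with probability beta/(beta+1) and False
  (move from (a,b) to (a+1,b)) with probability 1/(beta+1).\<close>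

definition walk_space :: "real \<Rightarrow> bool stream measure" where
  "walk_space \<beta> = stream_space (measure_pmf (bernoulli_pmf (\<beta> / (\<beta> + 1))))"

definition walk_pos :: "bool stream \<Rightarrow> nat \<Rightarrow> int \<times> int" where
  "walk_pos \<omega> k = (int (length (filter Not (stake k \<omega>))),
                    int (length (filter id (stake k \<omega>))))"

text \<open>Phi_beta(q,0): probability that the walk visits some point (n, q n + 1), n >= 0.\<close>
definition Phi :: "real \<Rightarrow> nat \<Rightarrow> real" where
  "Phi \<beta> q = measure (walk_space \<beta>)
     {\<omega> \<in> space (walk_space \<beta>). \<exists>k n::nat. walk_pos \<omega> k = (int n, int q * int n + 1)}"

end

theory Submission
  imports Defs
begin

definition stepv :: "nat \<Rightarrow> bool \<Rightarrow> int" where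
  "stepv q b = (if b then 1 else - int q)"

fun hitf :: "nat \<Rightarrow> nat \<Rightarrow> int \<Rightarrow> bool stream \<Rightarrow> bool" where
  "hitf q 0 s \<omega> = (s \<ge> 1)"
| "hitf q (Suc N) s \<omega> = (s \<ge> 1 \<or> hitf q N (s + stepv q (shd \<omega>)) (stl \<omega>))"

fun hN :: "real \<Rightarrow> nat \<Rightarrow> nat \<Rightarrow> int \<Rightarrow> real" where
  "hN pp q 0 s = (if s \<ge> 1 then 1 else 0)"
| "hN pp q (Suc N) s = (if s \<ge> 1 then 1 else pp * hN pp q N (s+1) + (1-pp) * hN pp q N (s - int q))"

definition Sv :: "nat \<Rightarrow> bool stream \<Rightarrow> nat \<Rightarrow> int" where
  "Sv q \<omega> k = int (length (filter id (stake k \<omega>))) - int q * int (length (filter Not (stake k \<omega>)))"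

lemma Sv_0[simp]: "Sv q \<omega> 0 = 0" by (simp add: Sv_def)

lemma Sv_Suc: "Sv q \<omega> (Suc k) = stepv q (shd \<omega>) + Sv q (stl \<omega>) k"
proof -
  have e: "stake (Suc k) \<omega> = shd \<omega> # stake k (stl \<omega>)" by (rule stake.simps(2))
  show ?thesis unfolding Sv_def e by (cases "shd \<omega>") (simp_all add: stepv_def algebra_simps)
qed

lemma Sv_Suc2: "Sv q \<omega> (Suc k) = Sv q \<omega> k + stepv q (\<omega> !! k)"
proof -
  have e: "stake (Suc k) \<omega> = stake k \<omega> @ [\<omega> !! k]" by (rule stake_Suc)
  show ?thesis unfolding Sv_def e by (cases "\<omega> !! k") (simp_all add: stepv_def algebra_simps)
qed

lemma hitf_iff: "hitf q N s \<omega> \<longleftrightarrow> (\<exists>k\<le>N. s + Sv q \<omega> k \<ge> 1)"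
proof (induction N arbitrary: s \<omega>)
  case 0 then show ?case by simp
next
  case (Suc N)
  have "(\<exists>k\<le>Suc N. s + Sv q \<omega> k \<ge> 1) \<longleftrightarrow> (s \<ge> 1 \<or> (\<exists>k\<le>N. s + Sv q \<omega> (Suc k) \<ge> 1))"
    by (metis (no_types, lifting) Sv_0 add.right_neutral Suc_le_mono not0_implies_Suc zero_le)
  then show ?case using Suc by (simp add: Sv_Suc add.assoc)
qed

lemma event_iff: "(\<exists>k n::nat. walk_pos \<omega> k = (int n, int q * int n + 1)) \<longleftrightarrow> (\<exists>N. hitf q N 0 \<omega>)"
proof
  assume "\<exists>k n::nat. walk_pos \<omega> k = (int n, int q * int n + 1)"
  then obtain k n where "walk_pos \<omega> k = (int n, int q * int n + 1)" by blast
  then have "Sv q \<omega> k = 1" by (auto simp: walk_pos_def Sv_def)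
  then have "hitf q k 0 \<omega>" using hitf_iff[of q k 0 \<omega>] by auto
  then show "\<exists>N. hitf q N 0 \<omega>" by blast
next
  assume "\<exists>N. hitf q N 0 \<omega>"
  then have ex: "\<exists>k. Sv q \<omega> k \<ge> 1" by (auto simp: hitf_iff)
  define k where "k = (LEAST k. Sv q \<omega> k \<ge> 1)"
  have k1: "Sv q \<omega> k \<ge> 1" unfolding k_def using ex by (rule LeastI_ex)
  have kmin: "\<And>j. j < k \<Longrightarrow> \<not> Sv q \<omega> j \<ge> 1" unfolding k_def using not_less_Least by blast
  have "k \<noteq> 0" using k1 by (metis Sv_0 not_one_le_zero)
  then obtain j where j: "k = Suc j" using not0_implies_Suc by blast
  have "Sv q \<omega> j \<le> 0" using kmin[of j] j by auto
  moreover have "Sv q \<omega> k \<le> Sv q \<omega> j + 1" using j by (simp add: Sv_Suc2 stepv_def)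
  ultimately have "Sv q \<omega> k = 1" using k1 by auto
  then have "walk_pos \<omega> k = (int (length (filter Not (stake k \<omega>))), int q * int (length (filter Not (stake k \<omega>))) + 1)"
    by (auto simp: walk_pos_def Sv_def)
  then show "\<exists>k n::nat. walk_pos \<omega> k = (int n, int q * int n + 1)" by blast
qed


lemma hN_ge1: "s \<ge> 1 \<Longrightarrow> hN pp q N s = 1" by (cases N) auto

lemma hN_bounds: assumes "0 \<le> pp" "pp \<le> 1" shows "0 \<le> hN pp q N s \<and> hN pp q N s \<le> 1"
proof (induction N arbitrary: s)
  case 0 show ?case by simp
next
  case (Suc N)
  have a: "0 \<le> hN pp q N (s+1)" "hN pp q N (s+1) \<le> 1" "0 \<le> hN pp q N (s - int q)" "hN pp q N (s - int q) \<le> 1" using Suc by auto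
  have "pp * hN pp q N (s+1) + (1-pp) * hN pp q N (s - int q) \<le> pp * 1 + (1-pp)*1"
    using a assms by (intro add_mono mult_left_mono) auto
  moreover have "0 \<le> pp * hN pp q N (s+1) + (1-pp) * hN pp q N (s - int q)" using a assms by simp
  ultimately show ?case by auto
qed

lemma hitf_pred: "Measurable.pred (stream_space (measure_pmf P)) (hitf q N s)"
proof (induction N arbitrary: s)
  case 0 show ?case by simp
next
  case (Suc N)
  have eq: "hitf q (Suc N) s = (\<lambda>\<omega>. s \<ge> 1 \<or> (shd \<omega> \<and> hitf q N (s+1) (stl \<omega>)) \<or> (\<not> shd \<omega> \<and> hitf q N (s - int q) (stl \<omega>)))"
    by (auto simp: stepv_def fun_eq_iff)
  note Suc[measurable]
  have [measurable]: "Measurable.pred (stream_space (measure_pmf P)) (\<lambda>\<omega>. shd \<omega>)"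
    using measurable_shd[of "measure_pmf P"] by (simp add: measurable_def)
  show ?case unfolding eq by measurable
qed

lemma hitf_sets: "{\<omega>. hitf q N s \<omega>} \<in> sets (stream_space (measure_pmf P))"
  using hitf_pred[where P=P and q=q and N=N and s=s] by (simp add: pred_def space_stream_space)

lemma hitf_emeasure:
  assumes "0 \<le> pp" "pp \<le> 1"
  shows "emeasure (stream_space (measure_pmf (bernoulli_pmf pp))) {\<omega>. hitf q N s \<omega>} = ennreal (hN pp q N s)"
proof -
  let ?M = "measure_pmf (bernoulli_pmf pp)"
  let ?S = "stream_space ?M"
  interpret S: prob_space ?S by (rule prob_space.prob_space_stream_space) (rule prob_space_measure_pmf)
  have sp: "space ?S = UNIV" by (simp add: space_stream_space)
  show ?thesis
  proof (induction N arbitrary: s)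
    case 0 show ?case using S.emeasure_space_1 sp by (cases "s \<ge> 1") auto
  next
    case (Suc N)
    show ?case
    proof (cases "s \<ge> 1")
      case True then show ?thesis using S.emeasure_space_1 sp by simp
    next
      case False
      have "emeasure ?S {\<omega>. hitf q (Suc N) s \<omega>} = (\<integral>\<^sup>+t. emeasure ?S {x\<in>space ?S. t ## x \<in> {\<omega>. hitf q (Suc N) s \<omega>}} \<partial>?M)"
        by (rule prob_space.emeasure_stream_space[OF prob_space_measure_pmf hitf_sets])
      also have "\<dots> = (\<integral>\<^sup>+t. ennreal (hN pp q N (s + stepv q t)) \<partial>?M)"
        using False by (simp add: sp Suc)
      also have "\<dots> = ennreal (hN pp q N (s+1)) * ennreal pp + ennreal (hN pp q N (s - int q)) * ennreal (1-pp)"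
        using assms by (simp add: stepv_def)
      also have "\<dots> = ennreal (hN pp q (Suc N) s)" using False hN_bounds[OF assms] assms
        by (simp add: ennreal_plus ennreal_mult'' mult.commute)
      finally show ?thesis .
    qed
  qed
qed


lemma hitf_mono: "hitf q N s \<omega> \<Longrightarrow> hitf q (Suc N) s \<omega>"
  by (auto simp: hitf_iff) (metis le_SucI)

lemma Phi_lim:
  assumes "\<beta> > 0"
  shows "(\<lambda>N. hN (\<beta>/(\<beta>+1)) q N 0) \<longlonglongrightarrow> Phi \<beta> q"
proof -
  define pp where "pp = \<beta>/(\<beta>+1)"
  have pp: "0 \<le> pp" "pp \<le> 1" using assms by (auto simp: pp_def)
  let ?M = "measure_pmf (bernoulli_pmf pp)"
  let ?S = "stream_space ?M"
  interpret S: prob_space ?S by (rule prob_space.prob_space_stream_space) (rule prob_space_measure_pmf)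
  have sp: "space ?S = UNIV" by (simp add: space_stream_space)
  define A where "A N = {\<omega>. hitf q N 0 \<omega>}" for N
  have ev: "{\<omega> \<in> space (walk_space \<beta>). \<exists>k n::nat. walk_pos \<omega> k = (int n, int q * int n + 1)} = (\<Union>N. A N)"
    by (auto simp: walk_space_def pp_def space_stream_space A_def event_iff)
  have "range A \<subseteq> sets ?S" by (auto simp: A_def hitf_sets)
  moreover have "incseq A" by (rule incseq_SucI) (auto simp: A_def intro: hitf_mono simp del: hitf.simps)
  ultimately have "(\<lambda>N. measure ?S (A N)) \<longlonglongrightarrow> measure ?S (\<Union>N. A N)"
    by (rule S.finite_Lim_measure_incseq)
  moreover have "measure ?S (A N) = hN pp q N 0" for N
    using hitf_emeasure[OF pp, of q N 0] hN_bounds[OF pp, of q N 0]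
    by (simp add: A_def measure_def)
  ultimately show ?thesis unfolding Phi_def ev by (simp add: walk_space_def pp_def)
qed


lemma hN_mono_Suc: assumes "0 \<le> pp" "pp \<le> 1" shows "hN pp q N s \<le> hN pp q (Suc N) s"
proof (induction N arbitrary: s)
  case 0 show ?case using hN_bounds[OF assms, of q "Suc 0" s] by auto
next
  case (Suc N)
  show ?case
  proof (cases "1 \<le> s")
    case True then show ?thesis by (simp add: hN_ge1)
  next
    case False
    have i1: "hN pp q N (s+1) \<le> hN pp q (Suc N) (s+1)" by (rule Suc.IH)
    have i2: "hN pp q N (s - int q) \<le> hN pp q (Suc N) (s - int q)" by (rule Suc.IH)
    have e1: "hN pp q (Suc N) s = pp * hN pp q N (s+1) + (1-pp) * hN pp q N (s - int q)"
      by (subst hN.simps(2)) (simp only: if_not_P[OF False])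
    have e2: "hN pp q (Suc (Suc N)) s = pp * hN pp q (Suc N) (s+1) + (1-pp) * hN pp q (Suc N) (s - int q)"
      by (subst hN.simps(2)) (simp only: if_not_P[OF False])
    have "pp * hN pp q N (s+1) + (1-pp) * hN pp q N (s - int q) \<le> pp * hN pp q (Suc N) (s+1) + (1-pp) * hN pp q (Suc N) (s - int q)"
      by (intro add_mono mult_left_mono i1 i2) (use assms in auto)
    then show ?thesis unfolding e1 e2 .
  qed
qed

lemma hN_mono: assumes "0 \<le> pp" "pp \<le> 1" "N \<le> M" shows "hN pp q N s \<le> hN pp q M s"
  using assms(3)
proof (induction rule: dec_induct)
  case base then show ?case by simp
next
  case (step n) then show ?case using hN_mono_Suc[OF assms(1,2), of q n s] by linarith
qed

lemma hN_mult: assumes "0 \<le> pp" "pp \<le> 1" shows "hN pp q N s * hN pp q M 0 \<le> hN pp q (N+M) (s-1)"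
proof (induction N arbitrary: s)
  case 0
  show ?case
  proof (cases "s \<ge> 1")
    case True
    show ?thesis
    proof (cases "s = 1")
      case True then show ?thesis by simp
    next
      case False then show ?thesis using \<open>s \<ge> 1\<close> hN_bounds[OF assms, of q M 0] by (simp add: hN_ge1)
    qed
  next
    case False then show ?thesis using hN_bounds[OF assms, of q M "s-1"] by simp
  qed
next
  case (Suc N)
  show ?case
  proof (cases "s \<ge> 1")
    case True
    show ?thesis
    proof (cases "s = 1")
      case True then show ?thesis using hN_mono[OF assms, of M "Suc N + M" q 0] by (simp add: hN_ge1)
    next
      case False then show ?thesis using \<open>s \<ge> 1\<close> hN_bounds[OF assms, of q M 0] by (simp add: hN_ge1)
    qed
  next
    case False
    have i1: "hN pp q N (s+1) * hN pp q M 0 \<le> hN pp q (N+M) s" using Suc[of "s+1"] by simp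
    have i2: "hN pp q N (s - int q) * hN pp q M 0 \<le> hN pp q (N+M) (s - 1 - int q)"
      using Suc[of "s - int q"] by (simp add: algebra_simps)
    have "hN pp q (Suc N) s * hN pp q M 0 = pp * (hN pp q N (s+1) * hN pp q M 0) + (1-pp) * (hN pp q N (s - int q) * hN pp q M 0)"
      using False by (simp add: algebra_simps)
    also have "\<dots> \<le> pp * hN pp q (N+M) s + (1-pp) * hN pp q (N+M) (s - 1 - int q)"
      using i1 i2 assms by (intro add_mono mult_left_mono) auto
    also have "\<dots> = hN pp q (Suc N + M) (s-1)" using False by simp
    finally show ?thesis .
  qed
qed

lemma hN_upper:
  assumes "0 \<le> pp" "pp \<le> 1" "(l::real) \<ge> 1" "pp * l + (1-pp) / l^q \<le> 1"
  shows "s \<le> 1 \<Longrightarrow> hN pp q N s * l ^ nat (1-s) \<le> 1"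
proof (induction N arbitrary: s)
  case 0 then show ?case by auto
next
  case (Suc N)
  show ?case
  proof (cases "s = 1")
    case True then show ?thesis by (simp add: hN_ge1)
  next
    case False
    then have s0: "s \<le> 0" using Suc.prems by auto
    define m where "m = nat (1-s)"
    have m1: "m \<ge> 1" using s0 by (simp add: m_def)
    have a: "hN pp q N (s+1) * l^(m-1) \<le> 1" 
    proof -
      have "nat (1 - (s+1)) = m - 1" using s0 by (simp add: m_def)
      then show ?thesis using Suc.IH[of "s+1"] s0 by simp
    qed
    have "nat (1 - (s - int q)) = m + q" using s0 by (simp add: m_def)
    then have b: "hN pp q N (s - int q) * l^(m+q) \<le> 1" using Suc.IH[of "s - int q"] s0 by simp
    have lpos: "l > 0" using assms by simp
    have a': "hN pp q N (s+1) * l^m \<le> l"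
    proof -
      have "l^m = l^(m-1) * l" using m1 by (metis Suc_diff_le diff_Suc_1 power_Suc2)
      then have "hN pp q N (s+1) * l^m = (hN pp q N (s+1) * l^(m-1)) * l" by simp
      also have "\<dots> \<le> 1 * l" using a lpos by (intro mult_right_mono) auto
      finally show ?thesis by simp
    qed
    have b': "hN pp q N (s - int q) * l^m \<le> 1 / l^q"
    proof -
      have "hN pp q N (s - int q) * l^m * l^q \<le> 1" using b by (simp add: power_add mult.assoc)
      then show ?thesis using lpos by (simp add: field_simps)
    qed
    have "hN pp q (Suc N) s * l ^ nat (1-s) = pp * (hN pp q N (s+1) * l^m) + (1-pp) * (hN pp q N (s - int q) * l^m)"
      using s0 by (simp add: m_def algebra_simps)
    also have "\<dots> \<le> pp * l + (1-pp) * (1 / l^q)" using a' b' assms by (intro add_mono mult_left_mono) auto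
    also have "\<dots> \<le> 1" using assms(4) by simp
    finally show ?thesis .
  qed
qed


lemma part2:
  assumes b: "\<beta> > 0" and qb: "real q > \<beta>"
  shows "Phi \<beta> q < 1"
proof -
  define pp where "pp = \<beta>/(\<beta>+1)"
  have pp: "0 \<le> pp" "pp \<le> 1" using b by (auto simp: pp_def)
  have q1: "real q > 0" using b qb by linarith
  define t where "t = (q-\<beta>)/(q*\<beta>)"
  define l where "l = 1 + t"
  have tpos: "t > 0" using b qb q1 by (simp add: t_def)
  have bt: "\<beta> * t = (q-\<beta>)/q" using b q1 by (simp add: t_def field_simps)
  have bern: "1 + real q * t \<le> l^q" unfolding l_def using Bernoulli_inequality[of t q] tpos by simp
  have prod1: "(1 - \<beta>*t) * (1 + real q * t) = 1"
    using b q1 unfolding bt t_def by (simp add: field_simps)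
  have pos: "1 + real q * t > 0" using tpos q1 by (simp add: add_pos_pos)
  have inv: "1 / l^q \<le> 1 - \<beta>*t"
  proof -
    have "1 / l^q \<le> 1 / (1 + real q * t)" using bern pos by (intro divide_left_mono) auto
    also have "\<dots> = 1 - \<beta>*t" using prod1 pos by (simp add: field_simps)
    finally show ?thesis .
  qed
  have l1: "l > 1" using tpos by (simp add: l_def)
  have "l^q > 0" using l1 by simp
  have key: "pp * l + (1-pp) / l^q \<le> 1"
  proof -
    have "pp * l + (1-pp) / l^q = (\<beta> * l + 1 / l^q) / (\<beta>+1)"
    proof -
      have e1: "1 - pp = 1/(\<beta>+1)" using b by (simp add: pp_def field_simps)
      show ?thesis unfolding e1 by (simp add: pp_def add_divide_distrib)
    qed
    also have "\<dots> \<le> (\<beta> * l + (1 - \<beta>*t)) / (\<beta>+1)" using inv b by (intro divide_right_mono) auto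
    also have "\<dots> = 1" using b by (simp add: l_def algebra_simps)
    finally show ?thesis .
  qed
  have bound: "hN pp q N 0 \<le> 1 / l" for N
  proof -
    have "hN pp q N 0 * l ^ nat (1 - 0) \<le> 1" by (rule hN_upper[OF pp _ key]) (use l1 in auto)
    then show ?thesis using l1 by (simp add: field_simps)
  qed
  have "Phi \<beta> q \<le> 1 / l"
    by (rule LIMSEQ_le_const2[OF Phi_lim[OF b]]) (use bound in \<open>auto simp: pp_def\<close>)
  also have "\<dots> < 1" using l1 by simp
  finally show ?thesis .
qed


lemma alg_final:
  fixes \<beta> r :: real
  assumes b: "\<beta> > 0" and qb: "real q \<le> \<beta>" and r0: "0 \<le> r" and r1: "r \<le> 1"
    and ineq: "r \<ge> \<beta>/(\<beta>+1) + (1 - \<beta>/(\<beta>+1)) * r^(q+1)"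
  shows "r = 1"
proof (rule ccontr)
  assume "r \<noteq> 1"
  then have rl: "r < 1" using r1 by simp
  have e1: "1 - \<beta>/(\<beta>+1) = 1/(\<beta>+1)" using b by (simp add: field_simps)
  have h1: "(\<beta>+1) * r \<ge> \<beta> + r^(q+1)"
  proof -
    have "(\<beta>+1) * r \<ge> (\<beta>+1) * (\<beta>/(\<beta>+1) + 1/(\<beta>+1) * r^(q+1))"
      using ineq b unfolding e1 by (intro mult_left_mono) auto
    also have "(\<beta>+1) * (\<beta>/(\<beta>+1) + 1/(\<beta>+1) * r^(q+1)) = \<beta> + r^(q+1)"
      using b by (simp add: distrib_left add_pos_pos[THEN less_imp_neq, symmetric])
    finally show ?thesis .
  qed
  have bern: "1 + real q * (r-1) \<le> r^q" using Bernoulli_inequality[of "r-1" q] r0 by simp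
  have "r * (1 + real q * (r-1)) \<le> r * r^q" using bern r0 by (rule mult_left_mono)
  then have "r^(q+1) \<ge> r + real q * r * (r-1)" by (simp add: algebra_simps)
  with h1 have "\<beta> * (r-1) \<ge> real q * r * (r-1)" by (simp add: algebra_simps)
  then have "(\<beta> - real q * r) * (r-1) \<ge> 0" by (simp add: algebra_simps)
  then have "\<beta> - real q * r \<le> 0" using rl by (simp add: zero_le_mult_iff)
  moreover have "real q * r < \<beta>"
  proof (cases "q = 0")
    case True then show ?thesis using b by simp
  next
    case False then have "real q * r < real q * 1" using rl by (intro mult_strict_left_mono) auto
    then show ?thesis using qb by simp
  qed
  ultimately show False by simp
qed

lemma part1:
  assumes b: "\<beta> > 0" and qb: "real q \<le> \<beta>"
  shows "Phi \<beta> q = 1"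
proof -
  define pp where "pp = \<beta>/(\<beta>+1)"
  have pp: "0 \<le> pp" "pp \<le> 1" using b by (auto simp: pp_def)
  define H where "H s = (SUP N. hN pp q N s)" for s
  have inc: "incseq (\<lambda>N. hN pp q N s)" for s by (rule incseq_SucI) (rule hN_mono_Suc[OF pp])
  have bdd: "bdd_above (range (\<lambda>N. hN pp q N s))" for s
    using hN_bounds[OF pp] by (intro bdd_aboveI[of _ 1]) auto
  have lim: "(\<lambda>N. hN pp q N s) \<longlonglongrightarrow> H s" for s
    unfolding H_def by (rule LIMSEQ_incseq_SUP[OF bdd inc])
  have le: "hN pp q N s \<le> H s" for N s by (rule incseq_le[OF inc lim])
  have "(\<lambda>N. hN pp q N 0) \<longlonglongrightarrow> Phi \<beta> q" using Phi_lim[OF b, of q] by (simp add: pp_def)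
  then have r: "H 0 = Phi \<beta> q" using LIMSEQ_unique[OF lim] by blast
  have H0: "0 \<le> H s" for s using le[of 0 s] hN_bounds[OF pp, of q 0 s] by linarith
  have H1: "H s \<le> 1" for s
    by (rule LIMSEQ_le_const2[OF lim]) (use hN_bounds[OF pp] in auto)
  have mult: "H s * H 0 \<le> H (s-1)" for s
  proof (rule LIMSEQ_le_const2)
    show "(\<lambda>N. hN pp q N s * hN pp q N 0) \<longlonglongrightarrow> H s * H 0" by (intro tendsto_mult lim)
    show "\<exists>N. \<forall>n\<ge>N. hN pp q n s * hN pp q n 0 \<le> H (s-1)"
      using hN_mult[OF pp, of q _ s] le order_trans by blast
  qed
  have rec: "H 0 = pp + (1-pp) * H (- int q)"
  proof (rule LIMSEQ_unique)
    show "(\<lambda>N. hN pp q (Suc N) 0) \<longlonglongrightarrow> H 0" using lim by (rule LIMSEQ_Suc)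
    have "(\<lambda>N. pp + (1-pp) * hN pp q N (- int q)) \<longlonglongrightarrow> pp + (1-pp) * H (- int q)"
      by (intro tendsto_intros lim)
    moreover have "hN pp q (Suc N) 0 = pp + (1-pp) * hN pp q N (- int q)" for N
    proof -
      have "hN pp q N 1 = 1" by (rule hN_ge1) simp
      then show ?thesis by simp
    qed
    ultimately show "(\<lambda>N. hN pp q (Suc N) 0) \<longlonglongrightarrow> pp + (1-pp) * H (- int q)" by presburger
  qed
  have pow: "H (- int k) \<ge> H 0 ^ (k+1)" for k
  proof (induction k)
    case 0 then show ?case by simp
  next
    case (Suc k)
    have "H 0 ^ (Suc k + 1) = H 0 ^ (k+1) * H 0" by simp
    also have "\<dots> \<le> H (- int k) * H 0" using Suc H0 by (intro mult_right_mono) auto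
    also have "\<dots> \<le> H (- int k - 1)" by (rule mult)
    also have "- int k - 1 = - int (Suc k)" by simp
    finally show ?case .
  qed
  have "H 0 \<ge> pp + (1-pp) * H 0 ^ (q+1)"
    unfolding rec[symmetric] using rec pow[of q] pp by (metis add_left_mono mult_left_mono diff_ge_0_iff_ge rec)
  then have "H 0 = 1" using alg_final[OF b qb H0 H1] by (simp add: pp_def)
  then show ?thesis using r by simp
qed

theorem mainTheorem9:
  fixes \<beta> :: real and p :: nat
  assumes "\<beta> > 0" and "p = nat \<lfloor>\<beta>\<rfloor>"
  shows "Phi \<beta> p = 1 \<and> Phi \<beta> (p + 1) < 1"
proof -
  have fl: "\<lfloor>\<beta>\<rfloor> \<ge> 0" using assms(1) by simp
  then have f: "real p = of_int \<lfloor>\<beta>\<rfloor>" using assms(2) by simp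
  have "real p \<le> \<beta>" using f by (simp add: of_int_floor_le)
  moreover have "real (p+1) > \<beta>" using f floor_correct[of \<beta>] by linarith
  ultimately show ?thesis using part1[OF assms(1)] part2[OF assms(1)] by blast
qed

end
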